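(* Under the standing assumptions below, for a single consensus instance $\mathsf{swid}$, any two commit certificates $\mathsf{cert}[\mathsf{Commit}(P_1)]$ and $\mathsf{cert}[\mathsf{Commit}(P_2)]$ for proposals $P_1,P_2$ of $\mathsf{swid}$ satisfy $\mathsf{decision}(P_1)=\mathsf{decision}(P_2)$.
   Context: Setting. There is a fixed finite set of authorities, some of which are honest and the rest arbitrary (Byzantine). A \emph{quorum} is a set of authorities of a fixed size (e.g. $2f+1$ out of $n=3f+1$ with at most $f$ dishonest), such that any two quorums intersect in at least one honest authority. For a message $M$, a \emph{certificate} $\mathsf{cert}[M]$ exists only if every authority of some quorum has signed (voted for) $M$. Data. A decision value is either $\mathsf{Confirm}$ or $\mathsf{Abort}$. A \emph{proposal} is a message $P = \mathsf{Proposal}(\mathsf{swid}, k, V)$ with round number $k \in \mathbb{N}$ and decision value $V$; write $\mathsf{round}(P)=k$, $\mathsf{decision}(P)=V$. A \emph{pre-commit certificate} is $C=\mathsf{cert}[\mathsf{PreCommit}(P)]$ and a \emph{commit certificate} is $C^*=\mathsf{cert}[\mathsf{Commit}(P)]$; $\mathsf{round}$ and $\mathsf{decision}$ of such certificates are those of $P$. Honest behavior. Each honest authority $\alpha$ keeps, for the instance $\mathsf{swid}$, two fields $\mathsf{proposed}(\alpha)$ (initially $\bot$, later a proposal) and $\mathsf{locked}(\alpha)$ (initially $\bot$, later a pre-commit certificate), which change only as follows. (i) $\alpha$ signs $\mathsf{PreCommit}(P)$ only if at that moment $P$ is \emph{safe}: (a) if $\mathsf{proposed}(\alpha)=P_0\neq\bot$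 and $P\ne P_0$ then $\mathsf{round}(P)>\mathsf{round}(P_0)$; and (b) if $\mathsf{locked}(\alpha)=C_0\neq\bot$ then $\mathsf{round}(P)>\mathsf{round}(C_0)$ and $\mathsf{decision}(P)=\mathsf{decision}(C_0)$; upon signing it sets $\mathsf{proposed}(\alpha):=P$. (ii) $\alpha$ signs $\mathsf{Commit}(P)$ only upon receiving a valid pre-commit certificate $C=\mathsf{cert}[\mathsf{PreCommit}(P)]$ that is \emph{safe} at that moment: (c) if $\mathsf{proposed}(\alpha)=P_0\neq\bot$ then $\mathsf{round}(C)\ge\mathsf{round}(P_0)$; and (d) if $\mathsf{locked}(\alpha)=C_0\neq\bot$ then $\mathsf{round}(C)\ge\mathsf{round}(C_0)$; upon signing it sets $\mathsf{locked}(\alpha):=C$. In particular, an honest authority signs $\mathsf{Commit}(P)$ only if a certificate $\mathsf{cert}[\mathsf{PreCommit}(P)]$ exists. *)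

theory Defs
  imports Main
begin

datatype decision = Confirm | Abort

datatype 's proposal = Proposal (swid: 's) (round: nat) (decision: decision)

datatype 's msg = PreCommit "'s proposal" | Commit "'s proposal"

text \<open>A locked pre-commit certificate
  cert[PreCommit(P)] is represented by the proposal P it certifies (its round and decision
  are those of P).\<close>
record ('a, 's) state =
  votes :: "('a \<times> 's msg) set"
  proposed :: "'a \<Rightarrow> 's proposal option"
  locked :: "'a \<Rightarrow> 's proposal option"

definition cert :: "'a set set \<Rightarrow> ('a \<times> 's msg) set \<Rightarrow> 's msg \<Rightarrow> bool" where
  "cert Qs V M \<longleftrightarrow> (\<exists>Q\<in>Qs. \<forall>a\<in>Q. (a, M) \<in> V)"

definition safe_precommit :: "'s proposal option \<Rightarrow> 's proposal option \<Rightarrow> 's proposal \<Rightarrow> bool" where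
  "safe_precommit prop lck P \<longleftrightarrow>
     (\<forall>P0. prop = Some P0 \<longrightarrow> P \<noteq> P0 \<longrightarrow> round P > round P0) \<and>
     (\<forall>C0. lck = Some C0 \<longrightarrow> round P > round C0 \<and> decision P = decision C0)"

definition safe_commit :: "'s proposal option \<Rightarrow> 's proposal option \<Rightarrow> 's proposal \<Rightarrow> bool" where
  "safe_commit prop lck P \<longleftrightarrow>
     (\<forall>P0. prop = Some P0 \<longrightarrow> round P \<ge> round P0) \<and>
     (\<forall>C0. lck = Some C0 \<longrightarrow> round P \<ge> round C0)"

inductive reachable :: "'a set set \<Rightarrow> 'a set \<Rightarrow> 's \<Rightarrow> ('a, 's) state \<Rightarrow> bool"
  for Qs :: "'a set set" and Honest :: "'a set" and sw :: 's where
  init: "reachable Qs Honest sw \<lparr>votes = {}, proposed = (\<lambda>_. None), locked = (\<lambda>_. None)\<rparr>"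
| byz: "reachable Qs Honest sw s \<Longrightarrow> a \<notin> Honest \<Longrightarrow>
        reachable Qs Honest sw (s\<lparr>votes := insert (a, m) (votes s)\<rparr>)"
| precommit: "reachable Qs Honest sw s \<Longrightarrow> a \<in> Honest \<Longrightarrow> swid P = sw \<Longrightarrow>
        safe_precommit (proposed s a) (locked s a) P \<Longrightarrow>
        reachable Qs Honest sw (s\<lparr>votes := insert (a, PreCommit P) (votes s),
                                  proposed := (proposed s)(a := Some P)\<rparr>)"
| commit: "reachable Qs Honest sw s \<Longrightarrow> a \<in> Honest \<Longrightarrow> swid P = sw \<Longrightarrow>
        cert Qs (votes s) (PreCommit P) \<Longrightarrow>
        safe_commit (proposed s a) (locked s a) P \<Longrightarrow>
        reachable Qs Honest sw (s\<lparr>votes := insert (a, Commit P) (votes s),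
                                  locked := (locked s)(a := Some P)\<rparr>)"

end

theory Submission
  imports Defs
begin

lemma cert_ins: "cert Qs V M \<Longrightarrow> cert Qs (insert x V) M"
  unfolding cert_def by blast

definition ainv :: "'a set set \<Rightarrow> ('a, 's) state \<Rightarrow> 'a \<Rightarrow> bool" where
"ainv Qs s a \<longleftrightarrow>
 (\<forall>P. (a, PreCommit P) \<in> votes s \<longrightarrow> (\<exists>P0. proposed s a = Some P0 \<and> (P = P0 \<or> round P < round P0))) \<and>
 (\<forall>P P'. (a,PreCommit P) \<in> votes s \<longrightarrow> (a,PreCommit P') \<in> votes s \<longrightarrow> round P = round P' \<longrightarrow> P = P') \<and>
 (\<forall>P. (a, Commit P) \<in> votes s \<longrightarrow> (\<exists>C. locked s a = Some C \<and> round P \<le> round C \<and> cert Qs (votes s) (PreCommit C))) \<and>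
 (\<forall>P. (a, Commit P) \<in> votes s \<longrightarrow> cert Qs (votes s) (PreCommit P)) \<and>
 (\<forall>P1 P. (a, Commit P1) \<in> votes s \<longrightarrow> (a, PreCommit P) \<in> votes s \<longrightarrow> round P \<le> round P1 \<or>
    (\<exists>C. round P1 \<le> round C \<and> round C < round P \<and> decision C = decision P \<and> cert Qs (votes s) (PreCommit C)))"

lemma inv_reach: "reachable Qs Honest sw s \<Longrightarrow> \<forall>a\<in>Honest. ainv Qs s a"
proof (induction rule: reachable.induct)
  case init
  then show ?case by (simp add: ainv_def)
next
  case (byz s a m)
  let ?s' = "s\<lparr>votes := insert (a, m) (votes s)\<rparr>"
  have ci: "\<And>M. cert Qs (votes s) M \<Longrightarrow> cert Qs (votes ?s') M" by (simp add: cert_ins)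
  show ?case
  proof
    fix b assume b: "b \<in> Honest"
    then have I: "ainv Qs s b" using byz.IH by blast
    have ba: "b \<noteq> a" using b byz.hyps(2) by blast
    have V: "\<And>M. (b, M) \<in> votes ?s' \<longleftrightarrow> (b, M) \<in> votes s" using ba by auto
    show "ainv Qs ?s' b" using I ci unfolding ainv_def V
      by (simp, meson)
  qed
next
  case (precommit s a P)
  let ?s' = "s\<lparr>votes := insert (a, PreCommit P) (votes s), proposed := (proposed s)(a := Some P)\<rparr>"
  have sa: "\<And>P0. proposed s a = Some P0 \<Longrightarrow> P \<noteq> P0 \<Longrightarrow> round P > round P0"
    "\<And>C0. locked s a = Some C0 \<Longrightarrow> round P > round C0 \<and> decision P = decision C0"
    using precommit.hyps(4) unfolding safe_precommit_def by auto
  have ci: "\<And>M. cert Qs (votes s) M \<Longrightarrow> cert Qs (votes ?s') M" by (simp add: cert_ins)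
  show ?case unfolding ainv_def
  proof (intro ballI conjI allI impI)
    fix b assume b: "b \<in> Honest"
    have I: "ainv Qs s b" using b precommit.IH by blast
    note I1 = I[unfolded ainv_def, THEN conjunct1, rule_format]
    note I2 = I[unfolded ainv_def, THEN conjunct2, THEN conjunct1, rule_format]
    note I3 = I[unfolded ainv_def, THEN conjunct2, THEN conjunct2, THEN conjunct1, rule_format]
    note I4 = I[unfolded ainv_def, THEN conjunct2, THEN conjunct2, THEN conjunct2, THEN conjunct1, rule_format]
    note I5 = I[unfolded ainv_def, THEN conjunct2, THEN conjunct2, THEN conjunct2, THEN conjunct2, rule_format]
    show "\<exists>P0. proposed ?s' b = Some P0 \<and> (Q = P0 \<or> round Q < round P0)"
      if "(b, PreCommit Q) \<in> votes ?s'" for Q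
    proof (cases "b = a")
      case True
      show ?thesis
      proof (cases "Q = P")
        case False
        then have "(a, PreCommit Q) \<in> votes s" using that True by auto
        then obtain P0 where "proposed s a = Some P0" "Q = P0 \<or> round Q < round P0"
          using I1 True by blast
        then have "round Q < round P"
          using sa(1) False by (cases "P = P0") auto
        then show ?thesis using True by simp
      qed (simp add: True)
    next
      case False
      then show ?thesis using that I1 by auto
    qed
    show "Q = Q'" if "(b, PreCommit Q) \<in> votes ?s'" "(b, PreCommit Q') \<in> votes ?s'" "round Q = round Q'" for Q Q'
    proof (cases "b = a")
      case True
      have key: "X = P" if kx: "(a, PreCommit X) \<in> votes s" "round X = round P" for X
      proof -
        obtain P0 where p0: "proposed s a = Some P0" "X = P0 \<or> round X < round P0"
          using I1 kx True by blast
        show ?thesis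
        proof (rule ccontr)
          assume "X \<noteq> P"
          then have "round P > round P0 \<or> P = P0" using sa(1)[OF p0(1)] by blast
          then show False using p0(2) kx(2) \<open>X \<noteq> P\<close> by auto
        qed
      qed
      show ?thesis
        using that I2 True key by auto
    next
      case False
      then show ?thesis using that I2 by auto
    qed
    show "\<exists>C. locked ?s' b = Some C \<and> round Q \<le> round C \<and> cert Qs (votes ?s') (PreCommit C)"
      if "(b, Commit Q) \<in> votes ?s'" for Q
      using that I3 ci by auto
    show "cert Qs (votes ?s') (PreCommit Q)" if "(b, Commit Q) \<in> votes ?s'" for Q
      using that I4 ci by auto
    show "round Q \<le> round Q1 \<or>
    (\<exists>C. round Q1 \<le> round C \<and> round C < round Q \<and> decision C = decision Q \<and> cert Qs (votes ?s') (PreCommit C))"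
      if "(b, Commit Q1) \<in> votes ?s'" "(b, PreCommit Q) \<in> votes ?s'" for Q1 Q
    proof (cases "b = a \<and> Q = P")
      case True
      have c: "(a, Commit Q1) \<in> votes s" using that True by auto
      then obtain C where "locked s a = Some C" "round Q1 \<le> round C" "cert Qs (votes s) (PreCommit C)"
        using I3 True by blast
      then show ?thesis using sa(2) True ci by force
    next
      case False
      then have "(b, Commit Q1) \<in> votes s" "(b, PreCommit Q) \<in> votes s" using that by auto
      from I5[OF this] show ?thesis using ci by blast
    qed
  qed
next
  case (commit s a P)
  let ?s' = "s\<lparr>votes := insert (a, Commit P) (votes s), locked := (locked s)(a := Some P)\<rparr>"
  have sa: "\<And>P0. proposed s a = Some P0 \<Longrightarrow> round P \<ge> round P0"
    "\<And>C0. locked s a = Some C0 \<Longrightarrow> round P \<ge> round C0"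
    using commit.hyps(5) unfolding safe_commit_def by auto
  have ci: "\<And>M. cert Qs (votes s) M \<Longrightarrow> cert Qs (votes ?s') M" by (simp add: cert_ins)
  show ?case unfolding ainv_def
  proof (intro ballI conjI allI impI)
    fix b assume b: "b \<in> Honest"
    have I: "ainv Qs s b" using b commit.IH by blast
    note I1 = I[unfolded ainv_def, THEN conjunct1, rule_format]
    note I2 = I[unfolded ainv_def, THEN conjunct2, THEN conjunct1, rule_format]
    note I3 = I[unfolded ainv_def, THEN conjunct2, THEN conjunct2, THEN conjunct1, rule_format]
    note I4 = I[unfolded ainv_def, THEN conjunct2, THEN conjunct2, THEN conjunct2, THEN conjunct1, rule_format]
    note I5 = I[unfolded ainv_def, THEN conjunct2, THEN conjunct2, THEN conjunct2, THEN conjunct2, rule_format]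
    show "\<exists>P0. proposed ?s' b = Some P0 \<and> (Q = P0 \<or> round Q < round P0)"
      if "(b, PreCommit Q) \<in> votes ?s'" for Q
      using that I1 by auto
    show "Q = Q'" if "(b, PreCommit Q) \<in> votes ?s'" "(b, PreCommit Q') \<in> votes ?s'" "round Q = round Q'" for Q Q'
      using that I2 by auto
    show "\<exists>C. locked ?s' b = Some C \<and> round Q \<le> round C \<and> cert Qs (votes ?s') (PreCommit C)"
      if "(b, Commit Q) \<in> votes ?s'" for Q
    proof (cases "b = a")
      case True
      have "round Q \<le> round P"
      proof (cases "Q = P")
        case False
        then have "(a, Commit Q) \<in> votes s" using that True by auto
        then obtain C where "locked s a = Some C" "round Q \<le> round C" using I3 True by blast
        then show ?thesis using sa(2) by force
      qed simp
      then show ?thesis using True ci commit.hyps(4) by simp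
    next
      case False
      then have "(b, Commit Q) \<in> votes s" using that by auto
      from I3[OF this] show ?thesis using False ci by auto
    qed
    show "cert Qs (votes ?s') (PreCommit Q)" if "(b, Commit Q) \<in> votes ?s'" for Q
    proof (cases "b = a \<and> Q = P")
      case True
      then show ?thesis using ci commit.hyps(4) by simp
    next
      case False
      then have "(b, Commit Q) \<in> votes s" using that by auto
      from I4[OF this] show ?thesis using ci by auto
    qed
    show "round Q \<le> round Q1 \<or>
    (\<exists>C. round Q1 \<le> round C \<and> round C < round Q \<and> decision C = decision Q \<and> cert Qs (votes ?s') (PreCommit C))"
      if "(b, Commit Q1) \<in> votes ?s'" "(b, PreCommit Q) \<in> votes ?s'" for Q1 Q
    proof (cases "b = a \<and> Q1 = P")
      case True
      have c: "(a, PreCommit Q) \<in> votes s" using that True by auto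
      then obtain P0 where "proposed s a = Some P0" "Q = P0 \<or> round Q < round P0"
        using I1 True by blast
      then have "round Q \<le> round P" using sa(1) by force
      then show ?thesis using True by simp
    next
      case False
      then have "(b, Commit Q1) \<in> votes s" "(b, PreCommit Q) \<in> votes s" using that by auto
      from I5[OF this] show ?thesis using ci by blast
    qed
  qed
qed


lemma commit_pre:
  assumes inv: "\<forall>a\<in>Honest. ainv Qs s a"
    and hq: "\<forall>Q1\<in>Qs. \<forall>Q2\<in>Qs. \<exists>a\<in>Q1 \<inter> Q2. a \<in> Honest"
    and c: "cert Qs (votes s) (Commit P1)"
  shows "cert Qs (votes s) (PreCommit P1)"
proof -
  obtain Q1 where Q1: "Q1 \<in> Qs" "\<forall>a\<in>Q1. (a, Commit P1) \<in> votes s" using c unfolding cert_def by blast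
  obtain a where a: "a \<in> Q1" "a \<in> Honest" using hq Q1(1) by blast
  have "ainv Qs s a" using inv a by blast
  then have "\<forall>P. (a, Commit P) \<in> votes s \<longrightarrow> cert Qs (votes s) (PreCommit P)" unfolding ainv_def by blast
  then show ?thesis using Q1 a by blast
qed

lemma key:
  assumes inv: "\<forall>a\<in>Honest. ainv Qs s a"
    and hq: "\<forall>Q1\<in>Qs. \<forall>Q2\<in>Qs. \<exists>a\<in>Q1 \<inter> Q2. a \<in> Honest"
    and c: "cert Qs (votes s) (Commit P1)"
  shows "round P = n \<Longrightarrow> round P1 \<le> round P \<Longrightarrow> cert Qs (votes s) (PreCommit P) \<Longrightarrow> decision P = decision P1"
proof (induction n arbitrary: P rule: less_induct)
  case (less n P)
  obtain Q1 where Q1: "Q1 \<in> Qs" "\<forall>a\<in>Q1. (a, Commit P1) \<in> votes s" using c unfolding cert_def by blast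
  obtain Q where Q: "Q \<in> Qs" "\<forall>a\<in>Q. (a, PreCommit P) \<in> votes s" using less.prems(3) unfolding cert_def by blast
  obtain a where a: "a \<in> Q1" "a \<in> Q" "a \<in> Honest" using hq Q1(1) Q(1) by blast
  have Ia: "ainv Qs s a" using inv a by blast
  have "round P \<le> round P1 \<or>
    (\<exists>C. round P1 \<le> round C \<and> round C < round P \<and> decision C = decision P \<and> cert Qs (votes s) (PreCommit C))"
    using Ia[unfolded ainv_def, THEN conjunct2, THEN conjunct2, THEN conjunct2, THEN conjunct2, rule_format] Q1 Q a by blast
  then show ?case
  proof
    assume "round P \<le> round P1"
    then have eq: "round P = round P1" using less.prems(2) by simp
    have "cert Qs (votes s) (PreCommit P1)" using commit_pre[OF inv hq c] .
    then obtain Q' where Q': "Q' \<in> Qs" "\<forall>a\<in>Q'. (a, PreCommit P1) \<in> votes s" unfolding cert_def by blast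
    obtain b where b: "b \<in> Q" "b \<in> Q'" "b \<in> Honest" using hq Q'(1) Q(1) by blast
    have Ib: "ainv Qs s b" using inv b by blast
    have "P = P1" using Ib[unfolded ainv_def, THEN conjunct2, THEN conjunct1, rule_format] Q Q' b eq by blast
    then show ?thesis by simp
  next
    assume "\<exists>C. round P1 \<le> round C \<and> round C < round P \<and> decision C = decision P \<and> cert Qs (votes s) (PreCommit C)"
    then obtain C where C: "round P1 \<le> round C" "round C < round P" "decision C = decision P" "cert Qs (votes s) (PreCommit C)" by blast
    have "decision C = decision P1" using less.IH[of "round C" C] C less.prems(1) by simp
    then show ?thesis using C(3) by simp
  qed
qed

theorem mainTheorem2:
  fixes Auth Honest :: "'a set" and Qs :: "'a set set" and qsize :: nat
    and sw :: 's and s :: "('a, 's) state" and P1 P2 :: "'s proposal"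
  assumes "finite Auth" and "Honest \<subseteq> Auth"
    and "\<forall>Q\<in>Qs. Q \<subseteq> Auth \<and> card Q = qsize"
    and "\<forall>Q1\<in>Qs. \<forall>Q2\<in>Qs. \<exists>a\<in>Q1 \<inter> Q2. a \<in> Honest"
    and "reachable Qs Honest sw s"
    and "swid P1 = sw" and "swid P2 = sw"
    and "cert Qs (votes s) (Commit P1)" and "cert Qs (votes s) (Commit P2)"
  shows "decision P1 = decision P2"
proof -
  have inv: "\<forall>a\<in>Honest. ainv Qs s a" using inv_reach[OF assms(5)] .
  show ?thesis
  proof (cases "round P1 \<le> round P2")
    case True
    show ?thesis using key[OF inv assms(4) assms(8) refl True commit_pre[OF inv assms(4) assms(9)]] by simp
  next
    case False
    show ?thesis using key[OF inv assms(4) assms(9) refl _ commit_pre[OF inv assms(4) assms(8)]] False by simp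
  qed
qed

end
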